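(* (i) For integers $p\geq 0$, $k\geq p+1$ and $n\geq 2k-p+2$, $q(M_{n,n-1}^{n-k-1,k-p})>q(M_{n,n-1}^{k-p,n-k-1})$. (ii) For integers $p\geq 0$, $k\geq p+2$ and $n\geq 2k-p+2$, $q(M_{n,n-1}^{n-k,k-p-1})>q(M_{n,n-1}^{n-k-1,k-p})$.
   Context: $q$ denotes the largest eigenvalue of $D+A$ (diagonal degree matrix plus adjacency matrix). $M_{n,m}^{s,t}$: bipartite graph with parts $X=X_1\cup X_2$, $Y=Y_1\cup Y_2$, $|X_1|=s$, $|X_2|=n-s$, $|Y_1|=m-t$, $|Y_2|=t$; edges are all pairs between $X_1$ and $Y_1$, between $X_2$ and $Y_1$, and between $X_2$ and $Y_2$. *)

theory Defs
  imports "Jordan_Normal_Form.Char_Poly"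
begin

text \<open>Vertex i < n is in X
  (X1 = {i. i < s}, X2 = {i. s \<le> i < n}); vertex n + j with j < m is in Y
  (Y1 = {n+j. j < m - t}, Y2 = {n+j. m - t \<le> j < m}).
  Edges: X1--Y1, X2--Y1, X2--Y2.\<close>

definition XY_edge :: "nat \<Rightarrow> nat \<Rightarrow> nat \<Rightarrow> nat \<Rightarrow> nat \<Rightarrow> nat \<Rightarrow> bool" where
  "XY_edge n m s t x y \<longleftrightarrow> x < n \<and> n \<le> y \<and> y < n + m \<and>
     ((x < s \<and> y - n < m - t) \<or> (s \<le> x \<and> y - n < m - t) \<or> (s \<le> x \<and> m - t \<le> y - n))"

definition M_adj :: "nat \<Rightarrow> nat \<Rightarrow> nat \<Rightarrow> nat \<Rightarrow> nat \<Rightarrow> nat \<Rightarrow> bool" where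
  "M_adj n m s t u v \<longleftrightarrow> XY_edge n m s t u v \<or> XY_edge n m s t v u"

definition signless_laplacian :: "nat \<Rightarrow> (nat \<Rightarrow> nat \<Rightarrow> bool) \<Rightarrow> real mat" where
  "signless_laplacian N adj = mat N N (\<lambda>(i, j).
     (if i = j then real (card {k. k < N \<and> adj i k}) else 0) + (if adj i j then 1 else 0))"

definition largest_eigenvalue :: "real mat \<Rightarrow> real" where
  "largest_eigenvalue A = Max {k. eigenvalue A k}"

definition qM :: "nat \<Rightarrow> nat \<Rightarrow> nat \<Rightarrow> nat \<Rightarrow> real" where
  "qM n m s t = largest_eigenvalue (signless_laplacian (n + m) (M_adj n m s t))"

end

theory Submission
  imports Defs
begin


lemma nb_set:
  fixes s1 s2 r1 r2 i :: nat
  defines "n \<equiv> s1 + s2" and "m \<equiv> r1 + r2"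
  assumes "i < n + m"
  shows "{j. j < n + m \<and> M_adj n m s1 r2 i j} =
    (if i < s1 then {n..<n+r1} else if i < n then {n..<n+m} else if i < n + r1 then {0..<n} else {s1..<n})"
  using assms(3) unfolding M_adj_def XY_edge_def n_def m_def
  by (auto simp: less_diff_conv)

definition pv :: "nat \<Rightarrow> nat \<Rightarrow> nat \<Rightarrow> real \<Rightarrow> real \<Rightarrow> real \<Rightarrow> real \<Rightarrow> nat \<Rightarrow> real" where
  "pv s1 n r1 a b c d i = (if i < s1 then a else if i < n then b else if i < n + r1 then c else d)"

definition SLm :: "nat \<Rightarrow> nat \<Rightarrow> nat \<Rightarrow> nat \<Rightarrow> real mat" where
  "SLm s1 s2 r1 r2 = signless_laplacian (s1+s2+(r1+r2)) (M_adj (s1+s2) (r1+r2) s1 r2)"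

lemma SLm_carrier: "SLm s1 s2 r1 r2 \<in> carrier_mat (s1+s2+(r1+r2)) (s1+s2+(r1+r2))"
  unfolding SLm_def signless_laplacian_def by simp

lemma SLm_nonneg: "i < s1+s2+(r1+r2) \<Longrightarrow> j < s1+s2+(r1+r2) \<Longrightarrow> SLm s1 s2 r1 r2 $$ (i,j) \<ge> 0"
  unfolding SLm_def signless_laplacian_def by simp

lemma row_gen:
  fixes N :: nat and adj :: "nat \<Rightarrow> nat \<Rightarrow> bool" and f :: "nat \<Rightarrow> real"
  assumes "i < N"
  shows "(signless_laplacian N adj *\<^sub>v vec N f) $ i =
     real (card {k. k < N \<and> adj i k}) * f i + (\<Sum>j\<in>{k. k < N \<and> adj i k}. f j)"
proof -
  have "(signless_laplacian N adj *\<^sub>v vec N f) $ i =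
     (\<Sum>j<N. ((if i = j then real (card {k. k < N \<and> adj i k}) else 0) + (if adj i j then 1 else 0)) * f j)"
    using assms unfolding signless_laplacian_def
    by (auto simp: scalar_prod_def lessThan_atLeast0 intro!: sum.cong)
  also have "\<dots> = (\<Sum>j<N. (if i = j then real (card {k. k < N \<and> adj i k}) * f j else 0)
      + (if adj i j then f j else 0))"
    by (intro sum.cong refl) (simp add: distrib_right)
  also have "\<dots> = (\<Sum>j<N. (if i = j then real (card {k. k < N \<and> adj i k}) * f j else 0))
      + (\<Sum>j<N. (if adj i j then f j else 0))"
    by (simp add: sum.distrib)
  also have "\<dots> = real (card {k. k < N \<and> adj i k}) * f i + (\<Sum>j\<in>{k. k < N \<and> adj i k}. f j)"
  proof -
    have "(\<Sum>j<N. (if adj i j then f j else 0)) = sum f {j\<in>{..<N}. adj i j}"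
      by (rule sum.inter_filter[symmetric]) simp
    also have "{j\<in>{..<N}. adj i j} = {k. k < N \<and> adj i k}" by auto
    finally show ?thesis using assms by (simp add: sum.delta)
  qed
  finally show ?thesis .
qed

lemma sum_const_on:
  assumes "\<And>j. j \<in> {u..<v} \<Longrightarrow> f j = (c::real)"
  shows "sum f {u..<v} = real (v - u) * c"
proof -
  have "sum f {u..<v} = sum (\<lambda>_. c) {u..<v}" by (rule sum.cong) (auto simp: assms)
  then show ?thesis by simp
qed

lemma SLm_row:
  fixes s1 s2 r1 r2 i :: nat and a b c d :: real
  defines "n \<equiv> s1 + s2" and "m \<equiv> r1 + r2"
  assumes i: "i < n + m"
  shows "(SLm s1 s2 r1 r2 *\<^sub>v vec (n+m) (pv s1 n r1 a b c d)) $ i =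
    (if i < s1 then real r1 * a + real r1 * c
     else if i < n then real m * b + real r1 * c + real r2 * d
     else if i < n + r1 then real n * c + real s1 * a + real s2 * b
     else real s2 * d + real s2 * b)"
proof -
  let ?f = "pv s1 n r1 a b c d"
  have S1: "sum ?f {0..<s1} = real s1 * a"
    using sum_const_on[of 0 s1 ?f a] unfolding pv_def by simp
  have S2: "sum ?f {s1..<n} = real s2 * b"
    using sum_const_on[of s1 n ?f b] unfolding pv_def n_def by simp
  have S3: "sum ?f {n..<n+r1} = real r1 * c"
    using sum_const_on[of n "n+r1" ?f c] unfolding pv_def n_def by simp
  have S4: "sum ?f {n+r1..<n+m} = real r2 * d"
    using sum_const_on[of "n+r1" "n+m" ?f d] unfolding pv_def n_def m_def by simp
  have S34: "sum ?f {n..<n+m} = real r1 * c + real r2 * d"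
    using sum.atLeastLessThan_concat[of n "n+r1" "n+m" ?f] S3 S4 unfolding m_def by simp
  have S12: "sum ?f {0..<n} = real s1 * a + real s2 * b"
    using sum.atLeastLessThan_concat[of 0 s1 n ?f] S1 S2 unfolding n_def by simp
  have row: "(SLm s1 s2 r1 r2 *\<^sub>v vec (n+m) ?f) $ i =
     real (card {k. k < n+m \<and> M_adj n m s1 r2 i k}) * ?f i + (\<Sum>j\<in>{k. k < n+m \<and> M_adj n m s1 r2 i k}. ?f j)"
    unfolding SLm_def n_def m_def using row_gen[OF i[unfolded n_def m_def]] by simp
  show ?thesis
    unfolding row nb_set[OF i[unfolded n_def m_def], folded n_def m_def]
    using S12 S34 S3 S2 unfolding pv_def by (auto simp: n_def m_def)
qed



lemma mv_sum:
  assumes "A \<in> carrier_mat N N" "v \<in> carrier_vec N" "i < N"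
  shows "(A *\<^sub>v v) $ i = (\<Sum>j\<in>{0..<N}. A $$ (i,j) * v $ j)"
  using assms by (auto simp: scalar_prod_def intro!: sum.cong)

lemma collatz_bound:
  fixes A :: "real mat"
  assumes A: "A \<in> carrier_mat N N"
    and nn: "\<And>i j. i < N \<Longrightarrow> j < N \<Longrightarrow> A $$ (i,j) \<ge> 0"
    and w: "w \<in> carrier_vec N" and wpos: "\<And>i. i < N \<Longrightarrow> w $ i > 0"
    and Aw: "A *\<^sub>v w = \<rho> \<cdot>\<^sub>v w"
    and ev: "eigenvalue A \<mu>"
  shows "\<mu> \<le> \<rho>"
proof -
  from ev A obtain v where v: "v \<in> carrier_vec N" and v0: "v \<noteq> 0\<^sub>v N" and Av: "A *\<^sub>v v = \<mu> \<cdot>\<^sub>v v"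
    unfolding eigenvalue_def eigenvector_def by auto
  obtain i1 where i1: "i1 < N" "v $ i1 \<noteq> 0"
  proof -
    have "\<exists>i<N. v $ i \<noteq> 0"
    proof (rule ccontr)
      assume "\<not> ?thesis"
      then have "v = 0\<^sub>v N" using v by (intro eq_vecI) auto
      with v0 show False by simp
    qed
    then show ?thesis using that by blast
  qed
  define g where "g j = \<bar>v $ j\<bar> / w $ j" for j
  define C where "C = Max (g ` {..<N})"
  have fin: "finite (g ` {..<N})" "g ` {..<N} \<noteq> {}" using i1 by auto
  obtain i0 where i0: "i0 < N" "g i0 = C"
    using Max_in[OF fin] unfolding C_def by auto
  have gle: "g j \<le> C" if "j < N" for j
    unfolding C_def using fin that by auto
  have vle: "\<bar>v $ j\<bar> \<le> C * w $ j" if "j < N" for j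
    using gle[OF that] wpos[OF that] unfolding g_def by (simp add: divide_le_eq)
  have g1: "g i1 > 0" unfolding g_def using i1 wpos[OF i1(1)] by simp
  have Cpos: "C > 0" using gle[OF i1(1)] g1 by simp
  have vi0: "\<bar>v $ i0\<bar> = C * w $ i0"
    using i0 wpos[OF i0(1)] unfolding g_def by (simp add: divide_eq_eq)
  have vi0pos: "\<bar>v $ i0\<bar> > 0" using vi0 Cpos wpos[OF i0(1)] by simp
  have "\<bar>\<mu>\<bar> * \<bar>v $ i0\<bar> = \<bar>(A *\<^sub>v v) $ i0\<bar>"
    using Av i0 v by (simp add: abs_mult)
  also have "\<dots> = \<bar>\<Sum>j\<in>{0..<N}. A $$ (i0,j) * v $ j\<bar>"
    using mv_sum[OF A v i0(1)] by simp
  also have "\<dots> \<le> (\<Sum>j\<in>{0..<N}. \<bar>A $$ (i0,j) * v $ j\<bar>)"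
    by (rule sum_abs)
  also have "\<dots> \<le> (\<Sum>j\<in>{0..<N}. A $$ (i0,j) * (C * w $ j))"
  proof (rule sum_mono)
    fix j assume "j \<in> {0..<N}"
    then have j: "j < N" by simp
    show "\<bar>A $$ (i0,j) * v $ j\<bar> \<le> A $$ (i0,j) * (C * w $ j)"
      using nn[OF i0(1) j] vle[OF j] by (simp add: abs_mult mult_left_mono)
  qed
  also have "\<dots> = C * (\<Sum>j\<in>{0..<N}. A $$ (i0,j) * w $ j)"
    by (simp add: sum_distrib_left algebra_simps)
  also have "\<dots> = C * (A *\<^sub>v w) $ i0"
    using mv_sum[OF A w i0(1)] by simp
  also have "\<dots> = C * (\<rho> * w $ i0)"
    using Aw i0 w by simp
  also have "\<dots> = \<rho> * \<bar>v $ i0\<bar>" using vi0 by simp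
  finally have "\<bar>\<mu>\<bar> * \<bar>v $ i0\<bar> \<le> \<rho> * \<bar>v $ i0\<bar>" .
  then have "\<bar>\<mu>\<bar> \<le> \<rho>" using vi0pos by simp
  then show ?thesis by simp
qed

lemma eig_finite:
  fixes A :: "real mat"
  assumes A: "A \<in> carrier_mat N N"
  shows "finite {k. eigenvalue A k}"
proof -
  have "char_poly A \<noteq> 0" using degree_monic_char_poly[OF A] by auto
  then have "finite {k. poly (char_poly A) k = 0}" by (rule poly_roots_finite)
  then show ?thesis using eigenvalue_root_char_poly[OF A] by simp
qed



definition Hp :: "nat \<Rightarrow> nat \<Rightarrow> nat \<Rightarrow> nat \<Rightarrow> real \<Rightarrow> real" where
  "Hp s1 s2 r1 r2 x = ((x - (real r1 + real r2)) * (x - real s2) - real r2 * real s2) *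
      ((x - (real s1 + real s2)) * (x - real r1) - real s1 * real r1)
      - real r1 * real s2 * (x - real s2) * (x - real r1)"

lemma aux1: "(x - s) * K = (q::real) \<Longrightarrow> s * K + q = x * K"
  by (simp add: algebra_simps)

lemma aux2:
  fixes D K F x n s1 r1 s2 :: real
  assumes "D * K = r1 * F" "F * ((x - n) * D - s1 * r1) = s2 * r1 * D" "D \<noteq> 0"
  shows "n * F + s1 * K + s2 * r1 = x * F"
proof -
  have "D * (n * F + s1 * K + s2 * r1) = n*F*D + s1*(D*K) + s2*r1*D" by (simp add: algebra_simps)
  also have "\<dots> = n*F*D + s1*(r1*F) + s2*r1*D" using assms(1) by simp
  also have "\<dots> = n*F*D + s1*r1*F + F * ((x - n) * D - s1 * r1)" using assms(2) by simp
  also have "\<dots> = D * (x * F)" by (simp add: algebra_simps)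
  finally have "D * (n * F + s1 * K + s2 * r1) = D * (x * F)" .
  then show ?thesis using assms(3) by simp
qed

lemma eigvec_eq:
  fixes s1 s2 r1 r2 :: nat and a b c d x :: real
  defines "n \<equiv> s1 + s2" and "m \<equiv> r1 + r2"
  assumes E1: "real r1 * a + real r1 * c = x * a"
    and E2: "real m * b + real r1 * c + real r2 * d = x * b"
    and E3: "real n * c + real s1 * a + real s2 * b = x * c"
    and E4: "real s2 * d + real s2 * b = x * d"
  shows "SLm s1 s2 r1 r2 *\<^sub>v vec (n+m) (pv s1 n r1 a b c d) = x \<cdot>\<^sub>v vec (n+m) (pv s1 n r1 a b c d)"
proof (rule eq_vecI)
  show "dim_vec (SLm s1 s2 r1 r2 *\<^sub>v vec (n+m) (pv s1 n r1 a b c d)) =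
        dim_vec (x \<cdot>\<^sub>v vec (n+m) (pv s1 n r1 a b c d))"
    using SLm_carrier[of s1 s2 r1 r2] unfolding n_def m_def by simp
  fix i assume "i < dim_vec (x \<cdot>\<^sub>v vec (n+m) (pv s1 n r1 a b c d))"
  then have i: "i < n + m" by simp
  show "(SLm s1 s2 r1 r2 *\<^sub>v vec (n+m) (pv s1 n r1 a b c d)) $ i = (x \<cdot>\<^sub>v vec (n+m) (pv s1 n r1 a b c d)) $ i"
    using SLm_row[of i s1 s2 r1 r2 a b c d, folded n_def m_def, OF i] i E1 E2 E3 E4
    by (simp add: pv_def algebra_simps)
qed

lemma root_eigen:
  fixes s1 s2 r1 r2 :: nat and x :: real
  defines "n \<equiv> s1 + s2" and "m \<equiv> r1 + r2"
  defines "f \<equiv> x - real m - real r2 * real s2 / (x - real s2)"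
  defines "v \<equiv> vec (n+m) (pv s1 n r1 (real r1 * f / (x - real r1)) (real r1) f (real s2 * real r1 / (x - real s2)))"
  assumes s2: "s2 > 0" and r1: "r1 > 0" and xr1: "x > real r1" and xs2: "x > real s2"
    and H: "Hp s1 s2 r1 r2 x = 0"
  shows "SLm s1 s2 r1 r2 *\<^sub>v v = x \<cdot>\<^sub>v v" and "v \<noteq> 0\<^sub>v (n+m)" and "v \<in> carrier_vec (n+m)"
proof -
  have d1: "x - real r1 \<noteq> 0" and d2: "x - real s2 \<noteq> 0" using xr1 xs2 by auto
  have fdef: "f * (x - real s2) = (x - real m) * (x - real s2) - real r2 * real s2"
    unfolding f_def using d2 by (simp add: field_simps)
  have fdef': "f * (x - real s2) = (x - (real r1 + real r2)) * (x - real s2) - real r2 * real s2"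
    using fdef unfolding m_def by simp
  show "SLm s1 s2 r1 r2 *\<^sub>v v = x \<cdot>\<^sub>v v" unfolding v_def n_def m_def
  proof (rule eigvec_eq)
    show "real r1 * (real r1 * f / (x - real r1)) + real r1 * f = x * (real r1 * f / (x - real r1))"
      using d1 by (simp add: field_simps)
    show "real (r1 + r2) * real r1 + real r1 * f + real r2 * (real s2 * real r1 / (x - real s2)) = x * real r1"
      unfolding f_def m_def by (simp add: algebra_simps)
    show "real s2 * (real s2 * real r1 / (x - real s2)) + real s2 * real r1 = x * (real s2 * real r1 / (x - real s2))"
    proof -
      have "(x - real s2) * (real s2 * real r1 / (x - real s2)) = real s2 * real r1"
        using d2 by simp
      then show ?thesis by (rule aux1)
    qed
    show "real (s1 + s2) * f + real s1 * (real r1 * f / (x - real r1)) + real s2 * real r1 = x * f"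
    proof (rule aux2)
      show "(x - real r1) * (real r1 * f / (x - real r1)) = real r1 * f" using d1 by simp
      show "x - real r1 \<noteq> 0" by (rule d1)
      let ?g = "(x - (real s1 + real s2)) * (x - real r1) - real s1 * real r1"
      have "Hp s1 s2 r1 r2 x = ((x - (real r1 + real r2)) * (x - real s2) - real r2 * real s2) * ?g
             - real r1 * real s2 * (x - real s2) * (x - real r1)"
        unfolding Hp_def by simp
      also have "\<dots> = (f * (x - real s2)) * ?g - real r1 * real s2 * (x - real s2) * (x - real r1)"
        by (simp only: fdef')
      also have "\<dots> = (x - real s2) * (f * ?g - real r1 * real s2 * (x - real r1))"
        by (simp add: algebra_simps)
      finally have "(x - real s2) * (f * ?g - real r1 * real s2 * (x - real r1)) = 0" using H by simp
      then have "f * ?g = real r1 * real s2 * (x - real r1)" using d2 by simp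
      then show "f * ((x - real (s1 + s2)) * (x - real r1) - real s1 * real r1) = real s2 * real r1 * (x - real r1)"
        by (simp add: mult.commute)
    qed
  qed
  show "v \<in> carrier_vec (n+m)" unfolding v_def by simp
  have "v $ s1 = real r1" unfolding v_def pv_def n_def using s2 by simp
  moreover have "s1 < n + m" unfolding n_def using s2 by simp
  ultimately show "v \<noteq> 0\<^sub>v (n+m)" using r1 by auto
qed



lemma qM_SLm: "qM (s1+s2) (r1+r2) s1 r2 = largest_eigenvalue (SLm s1 s2 r1 r2)"
  by (simp add: qM_def SLm_def)

lemma root_is_eig:
  fixes s1 s2 r1 r2 :: nat and x :: real
  assumes s2: "s2 > 0" and r1: "r1 > 0" and xr1: "x > real r1" and xs2: "x > real s2"
    and H: "Hp s1 s2 r1 r2 x = 0"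
  shows "eigenvalue (SLm s1 s2 r1 r2) x"
proof -
  note R = root_eigen[OF s2 r1 xr1 xs2 H]
  show ?thesis unfolding eigenvalue_def eigenvector_def
    using R SLm_carrier[of s1 s2 r1 r2] by (intro exI[of _ "vec _ _"]) auto
qed

lemma q_ge:
  fixes s1 s2 r1 r2 :: nat and x :: real
  assumes s2: "s2 > 0" and r1: "r1 > 0" and xr1: "x > real r1" and xs2: "x > real s2"
    and H: "Hp s1 s2 r1 r2 x = 0"
  shows "qM (s1+s2) (r1+r2) s1 r2 \<ge> x"
  unfolding qM_SLm largest_eigenvalue_def
  using root_is_eig[OF assms] eig_finite[OF SLm_carrier] by (intro Max_ge) auto

lemma q_eq:
  fixes s1 s2 r1 r2 :: nat and x :: real
  assumes s2: "s2 > 0" and r1: "r1 > 0" and xr1: "x > real r1" and xs2: "x > real s2"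
    and H: "Hp s1 s2 r1 r2 x = 0"
    and pos: "(x - (real r1 + real r2)) * (x - real s2) > real r2 * real s2"
  shows "qM (s1+s2) (r1+r2) s1 r2 = x"
proof -
  define n where "n = s1 + s2"
  define m where "m = r1 + r2"
  define f where "f = x - real m - real r2 * real s2 / (x - real s2)"
  define v where "v = vec (n+m) (pv s1 n r1 (real r1 * f / (x - real r1)) (real r1) f (real s2 * real r1 / (x - real s2)))"
  note R = root_eigen[OF s2 r1 xr1 xs2 H, folded n_def m_def, folded f_def, folded v_def]
  have fpos: "f > 0"
  proof -
    have "f * (x - real s2) = (x - (real r1 + real r2)) * (x - real s2) - real r2 * real s2"
      unfolding f_def m_def using xs2 by (simp add: field_simps)
    then have "f * (x - real s2) > 0" using pos by simp
    then show ?thesis using xs2 by (simp add: zero_less_mult_iff)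
  qed
  have vpos: "v $ i > 0" if "i < n + m" for i
    using that fpos xr1 xs2 r1 s2 unfolding v_def pv_def by auto
  have all: "\<mu> \<le> x" if "eigenvalue (SLm s1 s2 r1 r2) \<mu>" for \<mu>
    using collatz_bound[OF SLm_carrier[of s1 s2 r1 r2] SLm_nonneg, folded n_def m_def, of v x \<mu>]
      R vpos that by auto
  show ?thesis
    unfolding qM_SLm largest_eigenvalue_def
    using root_is_eig[OF s2 r1 xr1 xs2 H] eig_finite[OF SLm_carrier] all
    by (intro Max_eqI) auto
qed



lemma Hp_cont: "continuous_on S (\<lambda>x. Hp s1 s2 r1 r2 x)"
  unfolding Hp_def by (intro continuous_intros)

lemma root_between:
  assumes "Hp s1 s2 r1 r2 l < 0" "Hp s1 s2 r1 r2 u > 0" "l \<le> u"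
  shows "\<exists>x. l < x \<and> x < u \<and> Hp s1 s2 r1 r2 x = 0"
proof -
  obtain x where "l \<le> x" "x \<le> u" "Hp s1 s2 r1 r2 x = 0"
    using IVT'[of "Hp s1 s2 r1 r2" l 0 u] assms Hp_cont by force
  moreover have "x \<noteq> l" "x \<noteq> u" using assms calculation by auto
  ultimately show ?thesis by force
qed

lemma F1: fixes a e p :: nat
  shows "Hp (1+a) (p+3+a+e) (p+1+a) (2+a+e) (real (2*p+6+3*a+2*e)) = - real (3*a*a*a*a + 5*a*a*a*e + 8*a*a*a*p + 21*a*a*a + 2*a*a*e*e + 9*a*a*e*p + 22*a*a*e + 7*a*a*p*p + 40*a*a*p + 51*a*a + 2*a*e*e*p + 4*a*e*e + 4*a*e*p*p + 25*a*e*p + 29*a*e + 2*a*p*p*p + 21*a*p*p + 62*a*p + 51*a + 2*e*e*p + 2*e*e + 4*e*p*p + 16*e*p + 12*e + 2*p*p*p + 14*p*p + 30*p + 18)"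
  unfolding Hp_def by (simp add: algebra_simps)
lemma F2: fixes a e p :: nat
  shows "Hp (1+a) (p+3+a+e) (p+1+a) (2+a+e) (real (2*p+7+4*a+2*e)) = real (16*a*a*a*a + 32*a*a*a*e + 16*a*a*a*p + 104*a*a*a + 20*a*a*e*e + 24*a*a*e*p + 148*a*a*e + 4*a*a*p*p + 76*a*a*p + 249*a*a + 4*a*e*e*e + 8*a*e*e*p + 56*a*e*e + 4*a*e*p*p + 68*a*e*p + 221*a*e + 12*a*p*p + 116*a*p + 259*a + 4*e*e*e + 8*e*e*p + 36*e*e + 4*e*p*p + 44*e*p + 105*e + 8*p*p + 56*p + 98)"
  unfolding Hp_def by (simp add: algebra_simps)
lemma F3: fixes a e p :: nat and x :: real
  shows "Hp (2+a+e) (p+2+a) (p+2+a+e) (1+a) x = Hp (1+a) (p+3+a+e) (p+1+a) (2+a+e) x + (real e + 1) * x * (x - real (2*p+7+4*a+2*e))"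
  unfolding Hp_def by (simp add: algebra_simps)
lemma F4: fixes a e p :: nat
  shows "Hp (3+a+e) (p+3+a) (p+3+a+e) (2+a) (real (2*p+9+3*a+2*e)) = - real (3*a*a*a*a + 5*a*a*a*e + 8*a*a*a*p + 33*a*a*a + 2*a*a*e*e + 9*a*a*e*p + 40*a*a*e + 7*a*a*p*p + 64*a*a*p + 135*a*a + 2*a*e*e*p + 10*a*e*e + 4*a*e*p*p + 45*a*e*p + 105*a*e + 2*a*p*p*p + 35*a*p*p + 168*a*p + 243*a + 4*e*e*p + 12*e*e + 8*e*p*p + 54*e*p + 90*e + 4*p*p*p + 42*p*p + 144*p + 162)"
  unfolding Hp_def by (simp add: algebra_simps)
lemma F5: fixes a e p :: nat
  shows "Hp (3+a+e) (p+3+a) (p+3+a+e) (2+a) (real (2*p+11+4*a+2*e)) = real (16*a*a*a*a + 32*a*a*a*e + 16*a*a*a*p + 168*a*a*a + 20*a*a*e*e + 24*a*a*e*p + 244*a*a*e + 4*a*a*p*p + 124*a*a*p + 657*a*a + 4*a*e*e*e + 8*a*e*e*p + 96*a*e*e + 4*a*e*p*p + 116*a*e*p + 613*a*e + 20*a*p*p + 316*a*p + 1133*a + 8*e*e*e + 16*e*e*p + 112*e*e + 8*e*p*p + 136*e*p + 506*e + 24*p*p + 264*p + 726)"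
  unfolding Hp_def by (simp add: algebra_simps)
lemma F6: fixes a e p :: nat
  shows "Hp (4+a+e) (p+2+a) (p+4+a+e) (1+a) (real (2*p+11+4*a+2*e)) = real (16*a*a*a*a + 32*a*a*a*e + 16*a*a*a*p + 168*a*a*a + 20*a*a*e*e + 24*a*a*e*p + 228*a*a*e + 4*a*a*p*p + 124*a*a*p + 625*a*a + 4*a*e*e*e + 8*a*e*e*p + 80*a*e*e + 4*a*e*p*p + 100*a*e*p + 493*a*e + 20*a*p*p + 284*a*p + 957*a + 4*e*e*e + 8*e*e*p + 60*e*e + 4*e*p*p + 76*e*p + 297*e + 16*p*p + 176*p + 484)"
  unfolding Hp_def by (simp add: algebra_simps)
lemma F7: fixes a e p :: nat and x :: real
  shows "Hp (4+a+e) (p+2+a) (p+4+a+e) (1+a) x = Hp (3+a+e) (p+3+a) (p+3+a+e) (2+a) x - x * ((2 * real e + 3) * x - real (2*p+11+4*a+2*e) * (real e + 1))"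
  unfolding Hp_def by (simp add: algebra_simps)



lemma part_i:
  fixes n k p :: nat
  assumes "p + 1 \<le> k" "2 * k - p + 2 \<le> n"
  shows "qM n (n - 1) (n - k - 1) (k - p) > qM n (n - 1) (k - p) (n - k - 1)"
proof -
  obtain a where k: "k = p + 1 + a" using assms(1) le_iff_add by blast
  have "p + 4 + 2*a \<le> n" using assms(2) unfolding k by simp
  then obtain e where n: "n = p + 4 + 2*a + e" using le_iff_add by blast
  have c1: "n - 1 = (p+1+a)+(2+a+e)" "k - p = 1+a" "n - k - 1 = 2+a+e" using n k by auto
  have c2: "n = (1+a)+(p+3+a+e)" using n by simp
  have eq2: "qM n (n - 1) (k - p) (n - k - 1) = qM ((1+a)+(p+3+a+e)) ((p+1+a)+(2+a+e)) (1+a) (2+a+e)"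
    unfolding c1 by (simp only: c2)
  have c3: "n - 1 = (p+2+a+e)+(1+a)" "n = (2+a+e)+(p+2+a)" using n k by auto
  have eq1: "qM n (n - 1) (n - k - 1) (k - p) = qM ((2+a+e)+(p+2+a)) ((p+2+a+e)+(1+a)) (2+a+e) (1+a)"
    unfolding c1(2,3) c3(1) by (simp only: c3(2))
  define L where "L = real (2*p+6+3*a+2*e)"
  define U where "U = real (2*p+7+4*a+2*e)"
  have hL: "Hp (1+a) (p+3+a+e) (p+1+a) (2+a+e) L < 0" unfolding L_def F1 neg_less_0_iff_less of_nat_0_less_iff by simp
  have hU: "Hp (1+a) (p+3+a+e) (p+1+a) (2+a+e) U > 0" unfolding U_def F2 of_nat_0_less_iff by simp
  obtain \<rho> where \<rho>: "L < \<rho>" "\<rho> < U" "Hp (1+a) (p+3+a+e) (p+1+a) (2+a+e) \<rho> = 0"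
    using root_between[OF hL hU] unfolding L_def U_def by force
  have h1: "\<rho> - (real (p+1+a) + real (2+a+e)) > real (p+3+a+e)" using \<rho>(1) unfolding L_def by simp
  have h2: "\<rho> - real (p+3+a+e) > real (p+3+2*a+e)" using \<rho>(1) unfolding L_def by simp
  have "real (p+3+a+e) * real (p+3+2*a+e) < (\<rho> - (real (p+1+a) + real (2+a+e))) * (\<rho> - real (p+3+a+e))"
    by (rule mult_strict_mono[OF h1 h2]) (use h1 in auto)
  moreover have "real (2+a+e) * real (p+3+a+e) \<le> real (p+3+a+e) * real (p+3+2*a+e)"
  proof -
    have "(2+a+e) * (p+3+a+e) \<le> (p+3+2*a+e) * (p+3+a+e)" by (intro mult_right_mono) auto
    then have "real ((2+a+e) * (p+3+a+e)) \<le> real ((p+3+2*a+e) * (p+3+a+e))" by (simp only: of_nat_le_iff)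
    then show ?thesis by (simp only: of_nat_mult mult.commute)
  qed
  ultimately have pos: "(\<rho> - (real (p+1+a) + real (2+a+e))) * (\<rho> - real (p+3+a+e)) > real (2+a+e) * real (p+3+a+e)"
    by linarith
  have q2: "qM ((1+a)+(p+3+a+e)) ((p+1+a)+(2+a+e)) (1+a) (2+a+e) = \<rho>"
    by (rule q_eq[OF _ _ _ _ \<rho>(3) pos]) (use \<rho>(1) in \<open>auto simp: L_def\<close>)
  have "Hp (2+a+e) (p+2+a) (p+2+a+e) (1+a) \<rho> < 0"
    unfolding F3 \<rho>(3) using \<rho> unfolding U_def L_def by (simp add: mult_pos_neg)
  moreover have "Hp (2+a+e) (p+2+a) (p+2+a+e) (1+a) U > 0"
    unfolding F3 using hU unfolding U_def by simp
  ultimately obtain lam where lam: "\<rho> < lam" "lam < U" "Hp (2+a+e) (p+2+a) (p+2+a+e) (1+a) lam = 0"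
    using root_between \<rho>(2) by (metis less_imp_le)
  have q1: "qM ((2+a+e)+(p+2+a)) ((p+2+a+e)+(1+a)) (2+a+e) (1+a) \<ge> lam"
    by (rule q_ge[OF _ _ _ _ lam(3)]) (use lam(1) \<rho>(1) in \<open>auto simp: L_def\<close>)
  show ?thesis unfolding eq1 eq2 q2 using q1 lam(1) by simp
qed

lemma part_ii:
  fixes n k p :: nat
  assumes "p + 2 \<le> k" "2 * k - p + 2 \<le> n"
  shows "qM n (n - 1) (n - k) (k - p - 1) > qM n (n - 1) (n - k - 1) (k - p)"
proof -
  obtain a where k: "k = p + 2 + a" using assms(1) le_iff_add by blast
  have "p + 6 + 2*a \<le> n" using assms(2) unfolding k by simp
  then obtain e where n: "n = p + 6 + 2*a + e" using le_iff_add by blast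
  have c1: "n - 1 = (p+3+a+e)+(2+a)" "n - k - 1 = 3+a+e" "k - p = 2+a" using n k by auto
  have c2: "n = (3+a+e)+(p+3+a)" using n by simp
  have eqb: "qM n (n - 1) (n - k - 1) (k - p) = qM ((3+a+e)+(p+3+a)) ((p+3+a+e)+(2+a)) (3+a+e) (2+a)"
    unfolding c1 by (simp only: c2)
  have c3: "n - 1 = (p+4+a+e)+(1+a)" "n - k = 4+a+e" "k - p - 1 = 1+a" using n k by auto
  have c4: "n = (4+a+e)+(p+2+a)" using n by simp
  have eqa: "qM n (n - 1) (n - k) (k - p - 1) = qM ((4+a+e)+(p+2+a)) ((p+4+a+e)+(1+a)) (4+a+e) (1+a)"
    unfolding c3 by (simp only: c4)
  define L where "L = real (2*p+9+3*a+2*e)"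
  define U where "U = real (2*p+11+4*a+2*e)"
  have hL: "Hp (3+a+e) (p+3+a) (p+3+a+e) (2+a) L < 0" unfolding L_def F4 neg_less_0_iff_less of_nat_0_less_iff by simp
  have hU: "Hp (3+a+e) (p+3+a) (p+3+a+e) (2+a) U > 0" unfolding U_def F5 of_nat_0_less_iff by simp
  obtain \<rho> where \<rho>: "L < \<rho>" "\<rho> < U" "Hp (3+a+e) (p+3+a) (p+3+a+e) (2+a) \<rho> = 0"
    using root_between[OF hL hU] unfolding L_def U_def by force
  have h1: "\<rho> - (real (p+3+a+e) + real (2+a)) > real (p+4+a+e)" using \<rho>(1) unfolding L_def by simp
  have h2: "\<rho> - real (p+3+a) > real (p+6+2*a+2*e)" using \<rho>(1) unfolding L_def by simp
  have "real (p+4+a+e) * real (p+6+2*a+2*e) < (\<rho> - (real (p+3+a+e) + real (2+a))) * (\<rho> - real (p+3+a))"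
    by (rule mult_strict_mono[OF h1 h2]) (use h1 in auto)
  moreover have "real (2+a) * real (p+3+a) \<le> real (p+4+a+e) * real (p+6+2*a+2*e)"
  proof -
    have "(2+a) * (p+3+a) \<le> (p+4+a+e) * (p+6+2*a+2*e)" by (intro mult_le_mono) auto
    then have "real ((2+a) * (p+3+a)) \<le> real ((p+4+a+e) * (p+6+2*a+2*e))" by (simp only: of_nat_le_iff)
    then show ?thesis by (simp only: of_nat_mult)
  qed
  ultimately have pos: "(\<rho> - (real (p+3+a+e) + real (2+a))) * (\<rho> - real (p+3+a)) > real (2+a) * real (p+3+a)"
    by linarith
  have qb: "qM ((3+a+e)+(p+3+a)) ((p+3+a+e)+(2+a)) (3+a+e) (2+a) = \<rho>"
    by (rule q_eq[OF _ _ _ _ \<rho>(3) pos]) (use \<rho>(1) in \<open>auto simp: L_def\<close>)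
  have "(2 * real e + 3) * \<rho> - U * (real e + 1) = (real e + 1) * (2 * \<rho> - U) + \<rho>"
    by (simp add: algebra_simps)
  moreover have "2 * \<rho> - U > 0" using \<rho>(1) unfolding L_def U_def by simp
  moreover have "\<rho> > 0" using \<rho>(1) unfolding L_def by simp
  moreover have "(real e + 1) * (2 * \<rho> - U) > 0"
    using calculation(2) by (intro mult_pos_pos) auto
  ultimately have "(2 * real e + 3) * \<rho> - U * (real e + 1) > 0" by linarith
  then have "Hp (4+a+e) (p+2+a) (p+4+a+e) (1+a) \<rho> < 0"
    unfolding F7 \<rho>(3) using \<open>\<rho> > 0\<close> unfolding U_def by simp
  moreover have "Hp (4+a+e) (p+2+a) (p+4+a+e) (1+a) U > 0"
    unfolding U_def F6 of_nat_0_less_iff by simp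
  ultimately obtain lam where lam: "\<rho> < lam" "lam < U" "Hp (4+a+e) (p+2+a) (p+4+a+e) (1+a) lam = 0"
    using root_between \<rho>(2) by (metis less_imp_le)
  have qa: "qM ((4+a+e)+(p+2+a)) ((p+4+a+e)+(1+a)) (4+a+e) (1+a) \<ge> lam"
    by (rule q_ge[OF _ _ _ _ lam(3)]) (use lam(1) \<rho>(1) in \<open>auto simp: L_def\<close>)
  show ?thesis unfolding eqa eqb qb using qa lam(1) by simp
qed

theorem lemma5p2:
  fixes n k p :: nat
  shows "(p + 1 \<le> k \<and> 2 * k - p + 2 \<le> n \<longrightarrow>
            qM n (n - 1) (n - k - 1) (k - p) > qM n (n - 1) (k - p) (n - k - 1))
       \<and> (p + 2 \<le> k \<and> 2 * k - p + 2 \<le> n \<longrightarrow>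
            qM n (n - 1) (n - k) (k - p - 1) > qM n (n - 1) (n - k - 1) (k - p))"
  using part_i part_ii by blast

end
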